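(* Let $n>11$ and suppose $\mathcal{C}\subseteq S_n$ is a perfect single-error-correcting code with respect to the Kendall's $\tau$-distance. Let $r$ be a positive integer with $r<\frac{n}{4}$. Then for every sequence $i_1,i_2,\dots,i_r$ of $r$ distinct elements of $[n]$ and every choice of positions $1\leq j_1<j_2<\dots<j_r\leq n$, the number of codewords $\sigma\in\mathcal{C}$ satisfying $\sigma(j_\ell)=i_\ell$ for all $1\leq \ell\leq r$ is exactly $\frac{(n-r)!}{n}$.
   Context: $S_n$ denotes the set of all permutations of $[n]=\{1,\dots,n\}$, written $\sigma=[\sigma(1),\dots,\sigma(n)]$, where $\sigma(i)$ is the element in position $i$. An adjacent transposition applied to $\sigma$ exchanges the entries in positions $i$ and $i+1$ for some $1\leq i\leq n-1$. The Kendall's $\tau$-distance $d_K(\sigma,\pi)$ is the minimum number of adjacent transpositions needed to transform $\sigma$ into $\pi$. A perfect single-error-correcting code is a subset $\mathcal{C}\subseteq S_n$ such that every permutation of $S_n$ is at distance at most $1$ from exactly one element of $\mathcal{C}$. *)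

theory Defs
  imports "HOL-Combinatorics.Combinatorics"
begin

text \<open>S_n: permutations of {1..n}, as functions nat => nat; sigma i is the entry in position i.\<close>
definition Sn :: "nat \<Rightarrow> (nat \<Rightarrow> nat) set" where
  "Sn n = {\<sigma>. \<sigma> permutes {1..n}}"

definition adj_swap :: "nat \<Rightarrow> (nat \<Rightarrow> nat) \<Rightarrow> (nat \<Rightarrow> nat)" where
  "adj_swap i \<sigma> = \<sigma> \<circ> Transposition.transpose i (Suc i)"

fun reach :: "nat \<Rightarrow> nat \<Rightarrow> (nat \<Rightarrow> nat) \<Rightarrow> (nat \<Rightarrow> nat) \<Rightarrow> bool" where
  "reach n 0 \<sigma> \<pi> = (\<sigma> = \<pi>)"
| "reach n (Suc k) \<sigma> \<pi> = (\<exists>i. 1 \<le> i \<and> i \<le> n - 1 \<and> reach n k (adj_swap i \<sigma>) \<pi>)"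

definition kendall :: "nat \<Rightarrow> (nat \<Rightarrow> nat) \<Rightarrow> (nat \<Rightarrow> nat) \<Rightarrow> nat" where
  "kendall n \<sigma> \<pi> = (LEAST k. reach n k \<sigma> \<pi>)"

definition perfect_1code :: "nat \<Rightarrow> (nat \<Rightarrow> nat) set \<Rightarrow> bool" where
  "perfect_1code n C \<longleftrightarrow> C \<subseteq> Sn n \<and>
     (\<forall>\<pi>\<in>Sn n. \<exists>!c. c \<in> C \<and> kendall n \<pi> c \<le> 1)"

end

theory Submission
  imports Defs
begin

abbreviation T :: "nat \<Rightarrow> nat \<Rightarrow> nat" where
  "T k \<equiv> Transposition.transpose k (Suc k)"

definition U :: "nat \<Rightarrow> nat \<Rightarrow> nat" where
  "U k = (if k = 0 then id else T k)"

lemma reach_trans: "reach n a \<sigma> \<pi> \<Longrightarrow> reach n b \<pi> \<rho> \<Longrightarrow> reach n (a+b) \<sigma> \<rho>"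
  by (induction a arbitrary: \<sigma>) auto

lemma reach_one: "1 \<le> k \<Longrightarrow> k \<le> n - 1 \<Longrightarrow> reach n 1 \<sigma> (\<sigma> \<circ> T k)"
  by (auto simp: adj_swap_def)

lemma transpose_step: "a < b \<Longrightarrow> Transposition.transpose a (Suc b) = T b \<circ> Transposition.transpose a b \<circ> T b"
  by (auto simp: fun_eq_iff transpose_def)

lemma reach_transp_aux: "1 \<le> a \<Longrightarrow> a + Suc d \<le> n \<Longrightarrow> \<exists>k. reach n k \<sigma> (\<sigma> \<circ> Transposition.transpose a (a + Suc d))"
proof (induction d arbitrary: \<sigma>)
  case 0
  then have "reach n 1 \<sigma> (\<sigma> \<circ> Transposition.transpose a (a + Suc 0))" unfolding One_nat_def reach.simps adj_swap_def
    by (intro exI[of _ a]) auto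
  then show ?case by blast
next
  case (Suc d)
  let ?b = "a + Suc d"
  have r1: "reach n 1 \<sigma> (\<sigma> \<circ> T ?b)" using Suc.prems by (intro reach_one) auto
  have le: "a + Suc d \<le> n" using Suc.prems by simp
  from Suc.IH[OF Suc.prems(1) le] obtain k where r2: "reach n k (\<sigma> \<circ> T ?b) ((\<sigma> \<circ> T ?b) \<circ> Transposition.transpose a ?b)"
    by blast
  have r3: "reach n 1 ((\<sigma> \<circ> T ?b) \<circ> Transposition.transpose a ?b) ((\<sigma> \<circ> T ?b) \<circ> Transposition.transpose a ?b \<circ> T ?b)"
    using Suc.prems by (intro reach_one) auto
  have eq: "\<sigma> \<circ> Transposition.transpose a (a + Suc (Suc d)) = (\<sigma> \<circ> T ?b) \<circ> Transposition.transpose a ?b \<circ> T ?b"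
    using transpose_step[of a ?b] by (simp add: o_assoc)
  have R: "reach n (1 + k + 1) \<sigma> ((\<sigma> \<circ> T ?b) \<circ> Transposition.transpose a ?b \<circ> T ?b)"
    using reach_trans[OF reach_trans[OF r1 r2] r3] .
  have "reach n (1 + k + 1) \<sigma> (\<sigma> \<circ> Transposition.transpose a (a + Suc (Suc d)))"
    unfolding eq by (rule R)
  then show ?case by blast
qed

lemma reach_transp: "a \<in> {1..n} \<Longrightarrow> b \<in> {1..n} \<Longrightarrow> \<exists>k. reach n k \<sigma> (\<sigma> \<circ> Transposition.transpose a b)"
proof -
  assume a: "a \<in> {1..n}" and b: "b \<in> {1..n}"
  consider "a = b" | "a < b" | "b < a" by linarith
  then show ?thesis
  proof cases
    case 1
    then have "reach n 0 \<sigma> (\<sigma> \<circ> Transposition.transpose a b)" by simp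
    then show ?thesis by blast
  next
    case 2
    from less_imp_Suc_add[OF 2] obtain d where "b = Suc (a + d)" by blast
    then have bd: "b = a + Suc d" by simp
    have h: "1 \<le> a" "a + Suc d \<le> n" using a b bd by auto
    from reach_transp_aux[OF h] show ?thesis unfolding bd .
  next
    case 3
    from less_imp_Suc_add[OF 3] obtain d where "a = Suc (b + d)" by blast
    then have ad: "a = b + Suc d" by simp
    have h: "1 \<le> b" "b + Suc d \<le> n" using a b ad by auto
    have tc: "Transposition.transpose a b = Transposition.transpose b a" by (rule transpose_commute)
    have "\<exists>k. reach n k \<sigma> (\<sigma> \<circ> Transposition.transpose b a)" unfolding ad by (rule reach_transp_aux[OF h])
    then show ?thesis unfolding tc .
  qed
qed

lemma reach_perm: assumes "p permutes {1..n}" shows "\<forall>\<sigma>. \<exists>k. reach n k \<sigma> (\<sigma> \<circ> p)"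
  using assms finite_atLeastAtMost[of 1 n]
proof (induction p rule: permutes_induct)
  case id
  show ?case
  proof
    fix \<sigma> :: "nat \<Rightarrow> nat"
    have "reach n 0 \<sigma> (\<sigma> \<circ> id)" by simp
    then show "\<exists>k. reach n k \<sigma> (\<sigma> \<circ> id)" by blast
  qed
next
  case (swap a b p)
  show ?case
  proof
    fix \<sigma> :: "nat \<Rightarrow> nat"
    from reach_transp[OF swap(1) swap(2)] obtain k1 where 1: "reach n k1 \<sigma> (\<sigma> \<circ> Transposition.transpose a b)"
      by blast
    from swap(5) have "\<exists>k. reach n k (\<sigma> \<circ> Transposition.transpose a b) ((\<sigma> \<circ> Transposition.transpose a b) \<circ> p)"
      by (rule spec)
    then obtain k2 where 2: "reach n k2 (\<sigma> \<circ> Transposition.transpose a b) ((\<sigma> \<circ> Transposition.transpose a b) \<circ> p)"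
      by blast
    have e: "\<sigma> \<circ> (Transposition.transpose a b \<circ> p) = (\<sigma> \<circ> Transposition.transpose a b) \<circ> p"
      by (simp only: o_assoc)
    from reach_trans[OF 1 2] have "reach n (k1 + k2) \<sigma> ((\<sigma> \<circ> Transposition.transpose a b) \<circ> p)" .
    then show "\<exists>k. reach n k \<sigma> (\<sigma> \<circ> (Transposition.transpose a b \<circ> p))"
      unfolding e by blast
  qed
qed

lemma connected: "\<sigma> \<in> Sn n \<Longrightarrow> \<pi> \<in> Sn n \<Longrightarrow> \<exists>k. reach n k \<sigma> \<pi>"
proof -
  assume s: "\<sigma> \<in> Sn n" and p: "\<pi> \<in> Sn n"
  have sp: "\<sigma> permutes {1..n}" "\<pi> permutes {1..n}" using s p by (auto simp: Sn_def)
  have "inv \<sigma> \<circ> \<pi> permutes {1..n}" using sp by (intro permutes_compose permutes_inv) 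
  from reach_perm[OF this] have "\<exists>k. reach n k \<sigma> (\<sigma> \<circ> (inv \<sigma> \<circ> \<pi>))" by (rule spec)
  moreover have eq: "\<sigma> \<circ> (inv \<sigma> \<circ> \<pi>) = \<pi>" using permutes_inv_o(1)[OF sp(1)] by (simp add: o_assoc)
  ultimately show ?thesis by (simp only:)
qed

lemma reach01: assumes n: "n > 0" shows "reach n 0 \<sigma> c \<or> reach n 1 \<sigma> c \<longleftrightarrow> (\<exists>k\<in>{..<n}. \<sigma> = c \<circ> U k)"
proof
  assume "reach n 0 \<sigma> c \<or> reach n 1 \<sigma> c"
  then show "\<exists>k\<in>{..<n}. \<sigma> = c \<circ> U k"
  proof
    assume "reach n 0 \<sigma> c"
    then have "\<sigma> = c \<circ> U 0" by (simp add: U_def)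
    moreover have "0 \<in> {..<n}" using n by simp
    ultimately show ?thesis by blast
  next
    assume "reach n 1 \<sigma> c"
    then obtain k where k: "1 \<le> k" "k \<le> n - 1" "adj_swap k \<sigma> = c"
      unfolding One_nat_def reach.simps by blast
    then have k3: "\<sigma> \<circ> T k = c" by (simp add: adj_swap_def)
    have "c \<circ> T k = (\<sigma> \<circ> T k) \<circ> T k" using k3 by simp
    also have "\<dots> = \<sigma> \<circ> (T k \<circ> T k)" by (simp only: o_assoc)
    also have "\<dots> = \<sigma>" by simp
    finally have "\<sigma> = c \<circ> U k" using k(1) by (simp add: U_def)
    moreover have "k \<in> {..<n}" using k by simp
    ultimately show ?thesis by blast
  qed
next
  assume "\<exists>k\<in>{..<n}. \<sigma> = c \<circ> U k"
  then obtain k where k: "k < n" "\<sigma> = c \<circ> U k" by blast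
  show "reach n 0 \<sigma> c \<or> reach n 1 \<sigma> c"
  proof (cases "k = 0")
    case True
    then have "\<sigma> = c" using k(2) by (simp add: U_def)
    then have "reach n 0 \<sigma> c" by simp
    then show ?thesis by (rule disjI1)
  next
    case False
    then have "\<sigma> \<circ> T k = (c \<circ> T k) \<circ> T k" using k(2) by (simp add: U_def)
    also have "\<dots> = c \<circ> (T k \<circ> T k)" by (simp only: o_assoc)
    also have "\<dots> = c" by simp
    finally have e: "\<sigma> \<circ> T k = c" .
    have "reach n 1 \<sigma> (\<sigma> \<circ> T k)" by (rule reach_one) (use k False in auto)
    then have "reach n 1 \<sigma> c" unfolding e .
    then show ?thesis by (rule disjI2)
  qed
qed

lemma ball: "n > 0 \<Longrightarrow> \<sigma> \<in> Sn n \<Longrightarrow> c \<in> Sn n \<Longrightarrow> kendall n \<sigma> c \<le> 1 \<longleftrightarrow> (\<exists>k\<in>{..<n}. \<sigma> = c \<circ> U k)"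
proof -
  assume n: "n > 0" and s: "\<sigma> \<in> Sn n" and c: "c \<in> Sn n"
  have ex: "\<exists>k. reach n k \<sigma> c" using connected[OF s c] .
  have "kendall n \<sigma> c \<le> 1 \<longleftrightarrow> reach n 0 \<sigma> c \<or> reach n 1 \<sigma> c"
  proof
    assume le: "kendall n \<sigma> c \<le> 1"
    have R: "reach n (kendall n \<sigma> c) \<sigma> c" unfolding kendall_def using ex by (rule LeastI_ex)
    from le have "kendall n \<sigma> c = 0 \<or> kendall n \<sigma> c = 1" by linarith
    then show "reach n 0 \<sigma> c \<or> reach n 1 \<sigma> c"
    proof
      assume K: "kendall n \<sigma> c = 0" from R have "reach n 0 \<sigma> c" unfolding K . then show ?thesis by (rule disjI1)
    next
      assume K: "kendall n \<sigma> c = 1" from R have "reach n 1 \<sigma> c" unfolding K . then show ?thesis by (rule disjI2)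
    qed
  next
    assume "reach n 0 \<sigma> c \<or> reach n 1 \<sigma> c"
    then show "kendall n \<sigma> c \<le> 1"
    proof
      assume "reach n 0 \<sigma> c"
      then have "kendall n \<sigma> c \<le> 0" unfolding kendall_def by (rule Least_le)
      then show ?thesis by linarith
    next
      assume "reach n 1 \<sigma> c"
      then show "kendall n \<sigma> c \<le> 1" unfolding kendall_def by (rule Least_le)
    qed
  qed
  then show ?thesis using reach01[OF n] by blast
qed

lemma perm_restrict:
  assumes "\<phi> permutes S" "\<forall>y\<in>I. \<phi> y = y"
  shows "\<phi> permutes (S - I)"
  using assms unfolding permutes_def by blast

lemma count_fixed:
  assumes fS: "finite S" and fR: "finite R" and ip: "inj_on p R" and ii: "inj_on i R"
    and pS: "p ` R \<subseteq> S" and iS: "i ` R \<subseteq> S"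
  shows "card {\<pi>. \<pi> permutes S \<and> (\<forall>l\<in>R. \<pi> (p l) = i l)} = fact (card S - card R)"
proof -
  define J where "J = p ` R"
  define I where "I = i ` R"
  have cJ: "card J = card R" unfolding J_def using card_image[OF ip] .
  have cI: "card I = card R" unfolding I_def using card_image[OF ii] .
  have JS: "J \<subseteq> S" "I \<subseteq> S" using pS iS unfolding J_def I_def by auto
  have fJ: "finite J" "finite I" using JS fS finite_subset by auto
  have cSI: "card (S - I) = card S - card R" using card_Diff_subset[OF fJ(2) JS(2)] cI by simp
  have "card (S - J) = card (S - I)"
    using card_Diff_subset[OF fJ(1) JS(1)] card_Diff_subset[OF fJ(2) JS(2)] cJ cI by simp
  from finite_same_card_bij[OF finite_Diff[OF fS] finite_Diff[OF fS] this]
  obtain g where g: "bij_betw g (S - J) (S - I)" by blast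
  define f where "f = i \<circ> inv_into R p"
  have bp: "bij_betw p R J" unfolding J_def using ip by (rule inj_on_imp_bij_betw)
  have f: "bij_betw f J I"
  proof -
    have "bij_betw (inv_into R p) J R" using bij_betw_inv_into[OF bp] .
    moreover have "bij_betw i R I" unfolding I_def using ii by (rule inj_on_imp_bij_betw)
    ultimately show ?thesis unfolding f_def by (rule bij_betw_trans)
  qed
  define \<rho> where "\<rho> x = (if x \<in> J then f x else if x \<in> S then g x else x)" for x
  have b1: "bij_betw \<rho> J I"
  proof -
    have "bij_betw \<rho> J I = bij_betw f J I" by (rule bij_betw_cong) (simp add: \<rho>_def)
    then show ?thesis using f by simp
  qed
  have b2: "bij_betw \<rho> (S - J) (S - I)"
  proof -
    have "bij_betw \<rho> (S - J) (S - I) = bij_betw g (S - J) (S - I)" by (rule bij_betw_cong) (simp add: \<rho>_def)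
    then show ?thesis using g by simp
  qed
  have "bij_betw \<rho> (J \<union> (S - J)) (I \<union> (S - I))"
    by (rule bij_betw_combine[OF b1 b2]) blast
  moreover have "J \<union> (S - J) = S" "I \<union> (S - I) = S" using JS by auto
  ultimately have bS: "bij_betw \<rho> S S" by simp
  have \<rho>p: "\<rho> permutes S"
    by (rule bij_imp_permutes[OF bS]) (use JS in \<open>auto simp: \<rho>_def\<close>)
  have \<rho>R: "\<rho> (p l) = i l" if "l \<in> R" for l
  proof -
    have "p l \<in> J" using that unfolding J_def by blast
    then have "\<rho> (p l) = f (p l)" by (simp add: \<rho>_def)
    also have "\<dots> = i l" unfolding f_def using inv_into_f_f[OF ip that] by simp
    finally show ?thesis .
  qed
  have \<rho>J: "\<rho> ` J = I" using b1 by (simp add: bij_betw_def)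
  have A_eq: "{\<pi>. \<pi> permutes S \<and> (\<forall>l\<in>R. \<pi> (p l) = i l)} = {\<pi>. \<pi> permutes S \<and> (\<forall>x\<in>J. \<pi> x = \<rho> x)}"
    using \<rho>R unfolding J_def by auto
  have bij: "bij_betw (\<lambda>\<pi>. \<pi> \<circ> inv \<rho>) {\<pi>. \<pi> permutes S \<and> (\<forall>x\<in>J. \<pi> x = \<rho> x)} {\<phi>. \<phi> permutes (S - I)}"
  proof (rule bij_betw_byWitness[where f' = "\<lambda>\<phi>. \<phi> \<circ> \<rho>"])
    show "\<forall>a\<in>{\<pi>. \<pi> permutes S \<and> (\<forall>x\<in>J. \<pi> x = \<rho> x)}. a \<circ> inv \<rho> \<circ> \<rho> = a"
      using permutes_inv_o(2)[OF \<rho>p] by (simp add: comp_assoc)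
    show "\<forall>a'\<in>{\<phi>. \<phi> permutes (S - I)}. a' \<circ> \<rho> \<circ> inv \<rho> = a'"
      using permutes_inv_o(1)[OF \<rho>p] by (simp add: comp_assoc)
    show "(\<lambda>\<pi>. \<pi> \<circ> inv \<rho>) ` {\<pi>. \<pi> permutes S \<and> (\<forall>x\<in>J. \<pi> x = \<rho> x)} \<subseteq> {\<phi>. \<phi> permutes (S - I)}"
    proof clarify
      fix \<pi> assume \<pi>: "\<pi> permutes S" "\<forall>x\<in>J. \<pi> x = \<rho> x"
      have "\<pi> \<circ> inv \<rho> permutes S" by (rule permutes_compose[OF permutes_inv[OF \<rho>p] \<pi>(1)])
      moreover have "\<forall>y\<in>I. (\<pi> \<circ> inv \<rho>) y = y"
      proof
        fix y assume "y \<in> I"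
        then obtain x where x: "x \<in> J" "y = \<rho> x" using \<rho>J by blast
        then have "inv \<rho> y = x" using permutes_inverses(2)[OF \<rho>p] by simp
        then show "(\<pi> \<circ> inv \<rho>) y = y" using x \<pi>(2) by simp
      qed
      ultimately show "\<pi> \<circ> inv \<rho> permutes (S - I)" by (rule perm_restrict)
    qed
    show "(\<lambda>\<phi>. \<phi> \<circ> \<rho>) ` {\<phi>. \<phi> permutes (S - I)} \<subseteq> {\<pi>. \<pi> permutes S \<and> (\<forall>x\<in>J. \<pi> x = \<rho> x)}"
    proof clarify
      fix \<phi> assume \<phi>: "\<phi> permutes (S - I)"
      have "\<phi> permutes S" using permutes_subset[OF \<phi>] by blast
      then have "\<phi> \<circ> \<rho> permutes S" by (rule permutes_compose[OF \<rho>p])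
      moreover have "\<forall>x\<in>J. (\<phi> \<circ> \<rho>) x = \<rho> x"
      proof
        fix x assume "x \<in> J"
        then have "\<rho> x \<in> I" using \<rho>J by blast
        then have "\<rho> x \<notin> S - I" by blast
        then show "(\<phi> \<circ> \<rho>) x = \<rho> x" using permutes_not_in[OF \<phi>] by simp
      qed
      ultimately show "\<phi> \<circ> \<rho> permutes S \<and> (\<forall>x\<in>J. (\<phi> \<circ> \<rho>) x = \<rho> x)" by blast
    qed
  qed
  have "card {\<pi>. \<pi> permutes S \<and> (\<forall>l\<in>R. \<pi> (p l) = i l)} = card {\<phi>. \<phi> permutes (S - I)}"
    unfolding A_eq using bij by (rule bij_betw_same_card)
  also have "\<dots> = fact (card (S - I))" by (rule card_permutations) (use fS in auto)
  finally show ?thesis using cSI by simp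
qed

lemma U_permutes: "k < n \<Longrightarrow> U k permutes {1..n}"
proof (cases "k = 0")
  case True then show ?thesis by (simp add: U_def permutes_id)
next
  case False
  assume "k < n"
  then have "k \<in> {1..n}" "Suc k \<in> {1..n}" using False by auto
  then show ?thesis using False by (simp add: U_def permutes_swap_id)
qed

lemma U_inj: assumes "U k = U k'" shows "k = k'"
proof (rule ccontr)
  assume ne: "k \<noteq> k'"
  have e: "U k k = U k' k" using assms by simp
  have e2: "U k k' = U k' k'" using assms by simp
  show False
  proof (cases "k = 0")
    case True
    then have "k' \<noteq> 0" using ne by simp
    then show False using e2 True by (simp add: U_def transpose_def)
  next
    case False
    then show False using e ne by (auto simp: U_def transpose_def split: if_splits)
  qed
qed

lemma ident:
  assumes n: "n > 0" and code: "perfect_1code n C"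
    and ip: "inj_on p {1..r}" and pS: "p ` {1..r} \<subseteq> {1..n}"
    and ii: "inj_on i {1..r}" and iS: "i ` {1..r} \<subseteq> {1..n}"
  shows "(\<Sum>k<n. card {c\<in>C. \<forall>l\<in>{1..r}. c ((U k \<circ> p) l) = i l}) = fact (n - r)"
proof -
  define A where "A = {\<pi>. \<pi> permutes {1..n} \<and> (\<forall>l\<in>{1..r}. \<pi> (p l) = i l)}"
  define B where "B k = {c\<in>C. \<forall>l\<in>{1..r}. c (U k (p l)) = i l}" for k
  have CS: "C \<subseteq> Sn n" and uniq: "\<forall>\<pi>\<in>Sn n. \<exists>!c. c \<in> C \<and> kendall n \<pi> c \<le> 1"
    using code by (auto simp: perfect_1code_def)
  have fC: "finite C"
    using finite_subset[OF CS] finite_permutations[of "{1..n}"] unfolding Sn_def by blast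
  have cA: "card A = fact (n - r)"
    unfolding A_def using count_fixed[OF _ _ ip ii pS iS] by simp
  have bij: "bij_betw (\<lambda>(k,c). c \<circ> U k) (SIGMA k:{..<n}. B k) A"
    unfolding bij_betw_def
  proof
    show "inj_on (\<lambda>(k,c). c \<circ> U k) (SIGMA k:{..<n}. B k)"
    proof (rule inj_onI)
      fix x y assume x: "x \<in> (SIGMA k:{..<n}. B k)" and y: "y \<in> (SIGMA k:{..<n}. B k)"
        and e: "(\<lambda>(k,c). c \<circ> U k) x = (\<lambda>(k,c). c \<circ> U k) y"
      obtain k c where xe: "x = (k,c)" by (cases x)
      obtain k' c' where ye: "y = (k',c')" by (cases y)
      have k: "k \<in> {..<n}" "c \<in> B k" using x xe by auto
      have k': "k' \<in> {..<n}" "c' \<in> B k'" using y ye by auto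
      have eq: "c \<circ> U k = c' \<circ> U k'" using e xe ye by simp
      have cC: "c \<in> C" "c' \<in> C" using k k' by (auto simp: B_def)
      have cS: "c \<in> Sn n" "c' \<in> Sn n" using cC CS by auto
      have \<pi>S: "c \<circ> U k \<in> Sn n" using cS(1) U_permutes[of k n] k unfolding Sn_def
        by (auto intro: permutes_compose)
      have "kendall n (c \<circ> U k) c \<le> 1" using ball[OF n \<pi>S cS(1)] k by blast
      moreover have "kendall n (c \<circ> U k) c' \<le> 1" using ball[OF n \<pi>S cS(2)] k' eq by blast
      ultimately have cc: "c = c'" using uniq \<pi>S cC by blast
      have ic: "inj c" using cS(1) unfolding Sn_def by (auto intro: permutes_inj)
      have "U k = U k'"
      proof
        fix x
        have "c (U k x) = c (U k' x)" using eq cc by (metis comp_apply)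
        then show "U k x = U k' x" using ic by (simp add: inj_eq)
      qed
      then have "k = k'" by (rule U_inj)
      then show "x = y" using cc xe ye by simp
    qed
    show "(\<lambda>(k,c). c \<circ> U k) ` (SIGMA k:{..<n}. B k) = A"
    proof
      show "(\<lambda>(k,c). c \<circ> U k) ` (SIGMA k:{..<n}. B k) \<subseteq> A"
      proof
        fix z assume "z \<in> (\<lambda>(k,c). c \<circ> U k) ` (SIGMA k:{..<n}. B k)"
        then obtain k c where k: "k \<in> {..<n}" "c \<in> B k" and z: "z = c \<circ> U k" by auto
        have "c \<in> Sn n" using k CS by (auto simp: B_def)
        then have "c \<circ> U k permutes {1..n}" using U_permutes[of k n] k unfolding Sn_def
          by (auto intro: permutes_compose)
        then show "z \<in> A" using k z by (auto simp: A_def B_def)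
      qed
      show "A \<subseteq> (\<lambda>(k,c). c \<circ> U k) ` (SIGMA k:{..<n}. B k)"
      proof
        fix \<pi> assume \<pi>: "\<pi> \<in> A"
        then have \<pi>S: "\<pi> \<in> Sn n" by (simp add: A_def Sn_def)
        then obtain c where c: "c \<in> C" "kendall n \<pi> c \<le> 1" using uniq by blast
        then have "c \<in> Sn n" using CS by auto
        then obtain k where k: "k \<in> {..<n}" "\<pi> = c \<circ> U k" using ball[OF n \<pi>S] c by blast
        have "c \<in> B k" using \<pi> c k by (auto simp: A_def B_def)
        then have "(k, c) \<in> (SIGMA k:{..<n}. B k)" using k by blast
        moreover have "\<pi> = (\<lambda>(k,c). c \<circ> U k) (k, c)" using k by simp
        ultimately show "\<pi> \<in> (\<lambda>(k,c). c \<circ> U k) ` (SIGMA k:{..<n}. B k)" by blast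
      qed
    qed
  qed
  have "card A = card (SIGMA k:{..<n}. B k)" using bij_betw_same_card[OF bij] by simp
  also have "\<dots> = (\<Sum>k<n. card (B k))"
    by (rule card_SigmaI) (use fC in \<open>auto simp: B_def\<close>)
  finally show ?thesis using cA by (simp add: B_def)
qed

lemma U_fix: "q \<noteq> k \<Longrightarrow> q \<noteq> Suc k \<Longrightarrow> U k q = q"
  by (simp add: U_def)

theorem theorem3:
  fixes n r :: nat and C :: "(nat \<Rightarrow> nat) set" and i j :: "nat \<Rightarrow> nat"
  assumes "n > 11"
    and "perfect_1code n C"
    and "r > 0" and "real r < real n / 4"
    and "\<forall>l\<in>{1..r}. i l \<in> {1..n}" and "inj_on i {1..r}"
    and "\<forall>l\<in>{1..r}. j l \<in> {1..n}" and "strict_mono_on {1..r} j"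
  shows "real (card {\<sigma>\<in>C. \<forall>l\<in>{1..r}. \<sigma> (j l) = i l}) = fact (n - r) / real n"
proof -
  have n: "n > 0" using assms(1) by simp
  have code: "perfect_1code n C" by fact
  have r4: "4 * r < n" using assms(4) by simp
  have ii: "inj_on i {1..r}" and iS: "i ` {1..r} \<subseteq> {1..n}" using assms(5,6) by auto
  have CS: "C \<subseteq> Sn n" using code by (simp add: perfect_1code_def)
  have fC: "finite C"
    using finite_subset[OF CS] finite_permutations[of "{1..n}"] unfolding Sn_def by blast
  define P where "P = {q. inj_on q {1..r} \<and> q ` {1..r} \<subseteq> {1..n}}"
  define N where "N q = card {\<sigma>\<in>C. \<forall>l\<in>{1..r}. \<sigma> (q l) = i l}" for q
  define c0 :: real where "c0 = fact (n - r) / real n"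
  define x where "x q = real (N q) - c0" for q
  have jP: "j \<in> P" unfolding P_def using assms(7) strict_mono_on_imp_inj_on[OF assms(8)] by auto
  have UP: "U k \<circ> q \<in> P" if "q \<in> P" "k < n" for q k
  proof -
    have up: "U k permutes {1..n}" using U_permutes that(2) .
    have qq: "inj_on q {1..r}" "q ` {1..r} \<subseteq> {1..n}" using that(1) unfolding P_def by auto
    have "inj_on (U k) (q ` {1..r})" using inj_on_subset[OF permutes_inj[OF up] subset_UNIV] .
    then have "inj_on (U k \<circ> q) {1..r}" by (rule comp_inj_on[OF qq(1)])
    moreover have "(U k \<circ> q) ` {1..r} \<subseteq> {1..n}"
    proof -
      have "(U k \<circ> q) ` {1..r} = U k ` (q ` {1..r})" by (simp add: image_comp)
      also have "\<dots> \<subseteq> U k ` {1..n}" by (rule image_mono[OF qq(2)])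
      also have "\<dots> = {1..n}" by (rule permutes_image[OF up])
      finally show ?thesis .
    qed
    ultimately show ?thesis unfolding P_def by blast
  qed
  have sumx: "(\<Sum>k<n. x (U k \<circ> q)) = 0" if "q \<in> P" for q
  proof -
    have qq: "inj_on q {1..r}" "q ` {1..r} \<subseteq> {1..n}" using that(1) unfolding P_def by auto
    have h: "(\<Sum>k<n. N (U k \<circ> q)) = fact (n - r)"
      unfolding N_def by (rule ident[OF n code qq ii iS])
    have "(\<Sum>k<n. real (N (U k \<circ> q))) = fact (n - r)"
      using arg_cong[where f=real, OF h] by simp
    then show ?thesis unfolding x_def c0_def using n by (simp add: sum_subtractf)
  qed
  define K where "K q = {k \<in> {1..<n}. k \<in> q ` {1..r} \<or> Suc k \<in> q ` {1..r}}" for q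
  have NK: "N (U k \<circ> q) = N q" if "k < n" "k \<notin> K q" for q k
  proof -
    have "\<forall>l\<in>{1..r}. U k (q l) = q l"
    proof
      fix l assume l: "l \<in> {1..r}"
      show "U k (q l) = q l"
      proof (cases "k = 0")
        case True then show ?thesis by (simp add: U_def)
      next
        case False
        then have nk: "k \<notin> q ` {1..r}" "Suc k \<notin> q ` {1..r}" using that unfolding K_def by auto
        have ql: "q l \<in> q ` {1..r}" using l by blast
        have "q l \<noteq> k"
        proof
          assume "q l = k" then have "k \<in> q ` {1..r}" using ql by simp
          then show False using nk by blast
        qed
        moreover have "q l \<noteq> Suc k"
        proof
          assume "q l = Suc k" then have "Suc k \<in> q ` {1..r}" using ql by simp
          then show False using nk by blast
        qed
        ultimately show ?thesis by (rule U_fix)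
      qed
    qed
    then have "{\<sigma>\<in>C. \<forall>l\<in>{1..r}. \<sigma> ((U k \<circ> q) l) = i l} = {\<sigma>\<in>C. \<forall>l\<in>{1..r}. \<sigma> (q l) = i l}"
      by auto
    then show ?thesis unfolding N_def by simp
  qed
  have cK: "card (K q) \<le> 2 * r" for q
  proof -
    have sub: "K q \<subseteq> q ` {1..r} \<union> (\<lambda>y. y - 1) ` (q ` {1..r})"
    proof
      fix k assume "k \<in> K q"
      then have "k \<in> q ` {1..r} \<or> Suc k \<in> q ` {1..r}" unfolding K_def by blast
      then show "k \<in> q ` {1..r} \<union> (\<lambda>y. y - 1) ` (q ` {1..r})"
      proof
        assume "Suc k \<in> q ` {1..r}"
        then have "Suc k - 1 \<in> (\<lambda>y. y - 1) ` (q ` {1..r})" by blast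
        then show ?thesis by simp
      qed blast
    qed
    have c1: "card (q ` {1..r}) \<le> r" using card_image_le[of "{1..r}" q] by simp
    have c2: "card ((\<lambda>y. y - 1) ` (q ` {1..r})) \<le> r"
      using card_image_le[of "q ` {1..r}" "\<lambda>y. y - 1"] c1 by simp
    have "card (K q) \<le> card (q ` {1..r} \<union> (\<lambda>y. y - 1) ` (q ` {1..r}))"
      by (rule card_mono[OF _ sub]) simp
    also have "\<dots> \<le> card (q ` {1..r}) + card ((\<lambda>y. y - 1) ` (q ` {1..r}))" by (rule card_Un_le)
    finally show ?thesis using c1 c2 by simp
  qed
  have KS: "K q \<subseteq> {..<n}" for q unfolding K_def by auto
  define M where "M = N ` P"
  have NC: "N q \<le> card C" for q unfolding N_def by (rule card_mono[OF fC]) auto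
  have "M \<subseteq> {..card C}" unfolding M_def by (rule image_subsetI) (simp add: NC)
  then have fM: "finite M" by (rule finite_subset) simp
  define V where "V = (\<lambda>m. \<bar>real m - c0\<bar>) ` M"
  have fV: "finite V" unfolding V_def using fM by simp
  have "N j \<in> M" unfolding M_def using jP by (rule imageI)
  then have Vne: "V \<noteq> {}" unfolding V_def by blast
  define m0 where "m0 = Max V"
  have xle: "\<bar>x q\<bar> \<le> m0" if "q \<in> P" for q
  proof -
    have "N q \<in> M" unfolding M_def using that by (rule imageI)
    then have "\<bar>real (N q) - c0\<bar> \<in> V" unfolding V_def by (rule imageI)
    then have "\<bar>x q\<bar> \<in> V" unfolding x_def .
    then show ?thesis unfolding m0_def using fV by simp
  qed
  have "m0 \<in> V" unfolding m0_def using fV Vne by (rule Max_in)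
  then obtain m where m: "m \<in> M" "m0 = \<bar>real m - c0\<bar>" unfolding V_def by blast
  then obtain q0 where q0a: "q0 \<in> P" "m = N q0" unfolding M_def by blast
  have q0: "q0 \<in> P" "\<bar>x q0\<bar> = m0" using q0a m unfolding x_def by simp_all
  have m0ge: "m0 \<ge> 0" unfolding m(2) by simp
  define KK where "KK = K q0"
  define D where "D = {..<n} - KK"
  have cD: "card D = n - card KK" unfolding D_def using KS[of q0] unfolding KK_def
    by (simp add: card_Diff_subset finite_subset)
  have "0 = (\<Sum>k<n. x (U k \<circ> q0))" using sumx[OF q0(1)] by simp
  also have "\<dots> = (\<Sum>k\<in>KK. x (U k \<circ> q0)) + (\<Sum>k\<in>D. x (U k \<circ> q0))"
  proof -
    have "(\<Sum>k<n. x (U k \<circ> q0)) = (\<Sum>k\<in>{..<n} - KK. x (U k \<circ> q0)) + (\<Sum>k\<in>KK. x (U k \<circ> q0))"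
      by (rule sum.subset_diff) (use KS in \<open>auto simp: KK_def\<close>)
    then show ?thesis unfolding D_def by linarith
  qed
  also have "(\<Sum>k\<in>D. x (U k \<circ> q0)) = (\<Sum>k\<in>D. x q0)"
  proof (rule sum.cong)
    fix k assume "k \<in> D"
    then have "k < n" "k \<notin> K q0" unfolding D_def KK_def by auto
    then show "x (U k \<circ> q0) = x q0" unfolding x_def using NK by simp
  qed simp
  also have "\<dots> = real (card D) * x q0" by simp
  finally have eq0: "real (card D) * x q0 = - (\<Sum>k\<in>KK. x (U k \<circ> q0))" by linarith
  have "real (card D) * m0 = \<bar>\<Sum>k\<in>KK. x (U k \<circ> q0)\<bar>"
    using arg_cong[OF eq0, of abs] q0(2) by (simp add: abs_mult)
  also have "\<dots> \<le> (\<Sum>k\<in>KK. \<bar>x (U k \<circ> q0)\<bar>)" by (rule sum_abs)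
  also have "\<dots> \<le> real (card KK) * m0"
  proof -
    have "\<forall>k\<in>KK. \<bar>x (U k \<circ> q0)\<bar> \<le> m0"
    proof
      fix k assume "k \<in> KK"
      then have "k < n" using KS unfolding KK_def by blast
      then show "\<bar>x (U k \<circ> q0)\<bar> \<le> m0" by (rule xle[OF UP[OF q0(1)]])
    qed
    then show ?thesis using sum_bounded_above[of KK "\<lambda>k. \<bar>x (U k \<circ> q0)\<bar>" m0] by simp
  qed
  finally have ineq: "real (card D) * m0 \<le> real (card KK) * m0" .
  have ck: "card KK \<le> 2 * r" unfolding KK_def by (rule cK)
  have "real (card D) = real n - real (card KK)" using cD ck r4 by simp
  then have "real n - 2 * real (card KK) = real (card D) - real (card KK)" by linarith
  then have "(real n - 2 * real (card KK)) * m0 = (real (card D) - real (card KK)) * m0" by simp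
  also have "\<dots> = real (card D) * m0 - real (card KK) * m0" by (rule left_diff_distrib)
  finally have "(real n - 2 * real (card KK)) * m0 = real (card D) * m0 - real (card KK) * m0" .
  then have "(real n - 2 * real (card KK)) * m0 \<le> 0" using ineq by linarith
  moreover have "real n - 2 * real (card KK) > 0" using ck r4 by linarith
  ultimately have "m0 \<le> 0"
  proof (rule_tac ccontr)
    assume a: "(real n - 2 * real (card KK)) * m0 \<le> 0" "real n - 2 * real (card KK) > 0" "\<not> m0 \<le> 0"
    then have "m0 > 0" by simp
    from mult_pos_pos[OF a(2) this] a(1) show False by linarith
  qed
  then have "\<bar>x j\<bar> \<le> 0" using xle[OF jP] by linarith
  then have "real (N j) = c0" unfolding x_def by simp
  then show ?thesis unfolding N_def c0_def .
qed

end
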